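(* Let $n\ge1$ and let $V^i=V^i(u)$, $i=1,\dots,n$, be smooth functions. Consider the conservative hydrodynamic type system $u^i_t=(V^i(u))_x$ written in potential coordinates $b^i$ with $b^i_x=u^i$ as $F^i=b^i_t-V^i(b_x)=0$. Let $C$ be a second-order homogeneous Hamiltonian operator in canonical form $C^{ij}=\partial_x g^{ij}\partial_x$, where $(g^{ij})$ is the inverse of the nondegenerate matrix $g_{ij}=T_{ijk}u^k+g_{0ij}$ with $T_{ijk}$, $g_{0ij}$ constants skew-symmetric with respect to any pair of indices; in potential coordinates $C$ becomes the operator of order zero $C^{ij}=-g^{ij}(b_x)$, i.e. $C(\mathbf p)^i=-g^{ij}p_j$. Then the compatibility condition $\ell_F(C(\mathbf p))=0$ on the cotangent covering holds if and only if, for all indices, $$g_{qj}V^j_{,p}+g_{pj}V^j_{,q}=0,\qquad g_{qk}V^k_{,pl}+g_{pq,k}V^k_{,l}+g_{qk,l}V^k_{,p}=0 .$$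
   Context: Summation over repeated indices is understood; an index after a comma denotes partial derivative with respect to $u^k=b^k_x$, e.g. $V^j_{,p}=\partial V^j/\partial u^p$, $V^k_{,pl}=\partial^2V^k/\partial u^p\partial u^l$, $g_{pq,k}=\partial g_{pq}/\partial u^k$. The linearization of $F$ is $\ell_F(\varphi)^i=D_t\varphi^i-V^i_{,j}D_x\varphi^j$ ($D_t,D_x$ total derivatives). The cotangent covering is the system in $b^i$ and new odd variables $p_i$: $b^i_t=V^i(b_x)$, $p_{i,t}=V^j_{,i}p_{j,x}+V^j_{,il}b^l_{xx}p_j$. The condition $\ell_F(C(\mathbf p))=0$ on the cotangent covering means the expression vanishes identically in the jet variables after eliminating $b_t,p_t$ and their derivatives via the covering equations. *)

theory Defs
  imports "HOL-Analysis.Analysis"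
begin

text \<open>Vectors in R^n are modelled as real^'n for a finite index type 'n.
  Jet coordinates on the cotangent covering (in potential coordinates):
  u = b_x, w = b_xx, p = (p_i), q = p_x = (p_{i,x}).\<close>

definition pd :: "(real^'n \<Rightarrow> real) \<Rightarrow> 'n \<Rightarrow> real^'n \<Rightarrow> real" where
  "pd f k u = deriv (\<lambda>t. f (u + t *\<^sub>R axis k 1)) 0"

fun iter_pd :: "'n list \<Rightarrow> (real^'n \<Rightarrow> real) \<Rightarrow> real^'n \<Rightarrow> real" where
  "iter_pd [] f = f"
| "iter_pd (k # ks) f = pd (iter_pd ks f) k"

definition smooth_on :: "(real^'n) set \<Rightarrow> (real^'n \<Rightarrow> real) \<Rightarrow> bool" where
  "smooth_on U f \<longleftrightarrow> open U \<and> (\<forall>ks. iter_pd ks f differentiable_on U)"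

definition gmat :: "('n \<Rightarrow> 'n \<Rightarrow> 'n \<Rightarrow> real) \<Rightarrow> ('n \<Rightarrow> 'n \<Rightarrow> real) \<Rightarrow> real^'n \<Rightarrow> real^'n^'n" where
  "gmat T g0 u = (\<chi> i j. (\<Sum>k\<in>UNIV. T i j k * u $ k) + g0 i j)"

definition ginv :: "('n \<Rightarrow> 'n \<Rightarrow> 'n \<Rightarrow> real) \<Rightarrow> ('n \<Rightarrow> 'n \<Rightarrow> real) \<Rightarrow> real^'n \<Rightarrow> real^'n^'n" where
  "ginv T g0 u = matrix_inv (gmat T g0 u)"

definition totally_skew3 :: "('n \<Rightarrow> 'n \<Rightarrow> 'n \<Rightarrow> real) \<Rightarrow> bool" where
  "totally_skew3 T \<longleftrightarrow> (\<forall>i j k. T i j k = - T j i k \<and> T i j k = - T i k j \<and> T i j k = - T k j i)"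

definition skew2 :: "('n \<Rightarrow> 'n \<Rightarrow> real) \<Rightarrow> bool" where
  "skew2 A \<longleftrightarrow> (\<forall>i j. A i j = - A j i)"

definition Cop :: "('n \<Rightarrow> 'n \<Rightarrow> 'n \<Rightarrow> real) \<Rightarrow> ('n \<Rightarrow> 'n \<Rightarrow> real) \<Rightarrow> real^'n \<Rightarrow> real^'n \<Rightarrow> real^'n" where
  "Cop T g0 u p = (\<chi> i. - (\<Sum>j\<in>UNIV. ginv T g0 u $ i $ j * p $ j))"

text \<open>Total x-derivative of a function phi(u,p) (u = b_x, p): D_x u = w = b_xx, D_x p = q = p_x.\<close>
definition Dx :: "(real^'n \<Rightarrow> real^'n \<Rightarrow> real^'n) \<Rightarrow> 'n \<Rightarrow> real^'n \<Rightarrow> real^'n \<Rightarrow> real^'n \<Rightarrow> real^'n \<Rightarrow> real" where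
  "Dx \<phi> i u w p q =
     (\<Sum>k\<in>UNIV. pd (\<lambda>v. \<phi> v p $ i) k u * w $ k) + (\<Sum>j\<in>UNIV. pd (\<lambda>r. \<phi> u r $ i) j p * q $ j)"

text \<open>Total t-derivative of phi(u,p) on the cotangent covering, after eliminating the
  t-derivatives via b^k_t = V^k(b_x) (so b^k_{xt} = V^k_{,l} b^l_{xx}) and
  p_{j,t} = V^m_{,j} p_{m,x} + V^m_{,jl} b^l_{xx} p_m.\<close>
definition Dt :: "(real^'n \<Rightarrow> real^'n) \<Rightarrow> (real^'n \<Rightarrow> real^'n \<Rightarrow> real^'n) \<Rightarrow> 'n
                 \<Rightarrow> real^'n \<Rightarrow> real^'n \<Rightarrow> real^'n \<Rightarrow> real^'n \<Rightarrow> real" where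
  "Dt V \<phi> i u w p q =
     (\<Sum>k\<in>UNIV. pd (\<lambda>v. \<phi> v p $ i) k u * (\<Sum>l\<in>UNIV. pd (\<lambda>v. V v $ k) l u * w $ l))
   + (\<Sum>j\<in>UNIV. pd (\<lambda>r. \<phi> u r $ i) j p *
        ((\<Sum>m\<in>UNIV. pd (\<lambda>v. V v $ m) j u * q $ m)
         + (\<Sum>m\<in>UNIV. \<Sum>l\<in>UNIV. pd (pd (\<lambda>v. V v $ m) l) j u * w $ l * p $ m)))"

text \<open>Linearization of F^i = b^i_t - V^i(b_x) applied to phi, on the cotangent covering:
  ell_F(phi)^i = D_t phi^i - V^i_{,j} D_x phi^j.\<close>
definition ellF :: "(real^'n \<Rightarrow> real^'n) \<Rightarrow> (real^'n \<Rightarrow> real^'n \<Rightarrow> real^'n) \<Rightarrow> 'n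
                 \<Rightarrow> real^'n \<Rightarrow> real^'n \<Rightarrow> real^'n \<Rightarrow> real^'n \<Rightarrow> real" where
  "ellF V \<phi> i u w p q =
     Dt V \<phi> i u w p q - (\<Sum>j\<in>UNIV. pd (\<lambda>v. V v $ i) j u * Dx \<phi> j u w p q)"

end

theory Submission
  imports Defs
begin


lemma mi:
  fixes A :: "real^'n^'n"
  assumes "invertible A"
  shows "A ** matrix_inv A = mat 1" "matrix_inv A ** A = mat 1"
  using someI_ex[OF assms[unfolded invertible_def]] unfolding matrix_inv_def by auto

lemma det_cont:
  fixes M :: "real \<Rightarrow> real^'n^'n"
  assumes "\<And>i j. continuous F (\<lambda>t. M t $ i $ j)"
  shows "continuous F (\<lambda>t. det (M t))"
  unfolding det_def by (intro continuous_intros assms)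

lemma inv_cramer:
  fixes A :: "real^'n^'n"
  assumes "det A \<noteq> 0"
  shows "matrix_inv A $ k $ j = det (\<chi> i j'. if j' = k then axis j 1 $ i else A$i$j') / det A"
proof -
  have inv: "invertible A" using assms invertible_det_nz by blast
  have "A *v (matrix_inv A *v axis j 1) = axis j 1"
    by (simp add: matrix_vector_mul_assoc mi[OF inv])
  then have "matrix_inv A *v axis j 1 = (\<chi> k. det(\<chi> i j'. if j'=k then axis j 1 $i else A$i$j') / det A)"
    using cramer[OF assms] by blast
  moreover have "(matrix_inv A *v axis j 1) $ k = matrix_inv A $ k $ j"
    by (simp add: matrix_vector_mult_def axis_def if_distrib cong: if_cong)
  ultimately show ?thesis by simp
qed

lemma matrix_mul_rdistrib_diff:
  fixes B C :: "real^'m^'n"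
  shows "(B - C) ** A = B ** A - C ** A"
  by (vector matrix_matrix_mult_def sum_subtractf[symmetric] field_simps)

lemma inv_line_cont:
  fixes A B :: "real^'n^'n"
  assumes "invertible A"
  shows "((\<lambda>t. matrix_inv (A + t *\<^sub>R B) $ a $ b) \<longlongrightarrow> matrix_inv A $ a $ b) (at 0)"
proof -
  have dA: "det A \<noteq> 0" using assms invertible_det_nz by blast
  have c1: "continuous (at 0) (\<lambda>t. det (A + t *\<^sub>R B))"
    by (rule det_cont) (intro continuous_intros)
  have c2: "continuous (at 0) (\<lambda>t. det (\<chi> i j'. if j' = a then axis b 1 $ i else (A + t *\<^sub>R B)$i$j'))"
    by (rule det_cont, case_tac "j = a") (auto intro!: continuous_intros)
  have ev: "eventually (\<lambda>t. det (A + t *\<^sub>R B) \<noteq> 0) (at 0)"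
    using c1 dA unfolding continuous_at by (intro tendsto_imp_eventually_ne) auto
  have lim: "((\<lambda>t. det (\<chi> i j'. if j' = a then axis b 1 $ i else (A + t *\<^sub>R B)$i$j') / det (A + t *\<^sub>R B))
     \<longlongrightarrow> det (\<chi> i j'. if j' = a then axis b 1 $ i else A$i$j') / det A) (at 0)"
    using c1 c2 dA unfolding continuous_at
    by (intro tendsto_intros) (simp_all cong: if_cong)
  show ?thesis
    apply (rule Lim_transform_eventually[OF lim[folded inv_cramer[OF dA]]])
    using ev by eventually_elim (simp add: inv_cramer dA)
qed

lemma inv_line_deriv:
  fixes A B :: "real^'n^'n"
  assumes "invertible A"
  shows "((\<lambda>t. matrix_inv (A + t *\<^sub>R B) $ i $ j) has_real_derivative
           - (matrix_inv A ** B ** matrix_inv A) $ i $ j) (at 0)"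
proof -
  define N where "N t = matrix_inv (A + t *\<^sub>R B)" for t
  have dA: "det A \<noteq> 0" using assms invertible_det_nz by blast
  have c1: "continuous (at 0) (\<lambda>t. det (A + t *\<^sub>R B))"
    by (rule det_cont) (intro continuous_intros)
  have ev: "eventually (\<lambda>t. det (A + t *\<^sub>R B) \<noteq> 0) (at 0)"
    using c1 dA unfolding continuous_at by (intro tendsto_imp_eventually_ne) auto
  have Nl: "((\<lambda>t. N t $ a $ b) \<longlongrightarrow> N 0 $ a $ b) (at 0)" for a b
    using inv_line_cont[OF assms] unfolding N_def by simp
  have lim: "((\<lambda>t. - (N t ** B ** N 0) $ i $ j) \<longlongrightarrow> - (N 0 ** B ** N 0) $ i $ j) (at 0)"
    unfolding matrix_matrix_mult_def by (simp, intro tendsto_intros Nl)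
  have key: "N t - N 0 = - (t *\<^sub>R (N t ** B ** N 0))" if "det (A + t *\<^sub>R B) \<noteq> 0" for t
  proof -
    have it: "invertible (A + t *\<^sub>R B)" using that invertible_det_nz by blast
    have e1: "N t ** A + t *\<^sub>R (N t ** B) = mat 1"
      using mi(2)[OF it] unfolding N_def by (simp add: matrix_add_ldistrib matrix_scalar_ac scalar_matrix_assoc[symmetric])
    have e2: "N t ** A = mat 1 - t *\<^sub>R (N t ** B)" using e1 by (simp add: algebra_simps)
    have "N t = N t ** (A ** N 0)" using mi(1)[OF assms] unfolding N_def by simp
    also have "\<dots> = (N t ** A) ** N 0" by (simp add: matrix_mul_assoc)
    also have "\<dots> = N 0 - t *\<^sub>R (N t ** B ** N 0)"
      unfolding e2 by (simp add: matrix_mul_rdistrib_diff scalar_matrix_assoc)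
    finally show ?thesis by (simp add: algebra_simps)
  qed
  have "((\<lambda>t. (N t $ i $ j - N 0 $ i $ j) / (t - 0)) \<longlongrightarrow> - (N 0 ** B ** N 0) $ i $ j) (at 0)"
    apply (rule Lim_transform_eventually[OF lim])
    using ev eventually_neq_at_within[of 0 0 UNIV]
  proof eventually_elim
    case (elim t)
    then have "N t $ i $ j - N 0 $ i $ j = - t * (N t ** B ** N 0) $ i $ j"
      using key[of t] by (simp add: vec_eq_iff)
    then show ?case using elim by simp
  qed
  then show ?thesis unfolding has_field_derivative_iff N_def by simp
qed

lemma line_deriv:
  fixes f :: "real^'n \<Rightarrow> real"
  assumes "f differentiable (at (x + t0 *\<^sub>R axis k 1))"
  shows "((\<lambda>t. f (x + t *\<^sub>R axis k 1)) has_real_derivative pd f k (x + t0 *\<^sub>R axis k 1)) (at t0)"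
proof -
  obtain f' where f': "(f has_derivative f') (at (x + t0 *\<^sub>R axis k 1))"
    using assms unfolding differentiable_def by blast
  have bl: "bounded_linear f'" using f' has_derivative_bounded_linear by blast
  have gen: "((\<lambda>t. f (y + t *\<^sub>R axis k 1)) has_real_derivative f' (axis k 1)) (at t1)"
    if "y + t1 *\<^sub>R axis k 1 = x + t0 *\<^sub>R axis k 1" for y t1
  proof -
    have g: "((\<lambda>t. y + t *\<^sub>R axis k 1) has_derivative (\<lambda>h. h *\<^sub>R axis k 1)) (at t1)"
      by (auto intro!: derivative_eq_intros)
    have "((\<lambda>t. f (y + t *\<^sub>R axis k 1)) has_derivative (\<lambda>h. f' (h *\<^sub>R axis k 1))) (at t1)"
      using has_derivative_compose[OF g, of f f'] f' that by simp
    moreover have "(\<lambda>h. f' (h *\<^sub>R axis k 1)) = (*) (f' (axis k 1))"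
      using linear_scale[OF bounded_linear.linear[OF bl]] by auto
    ultimately show ?thesis unfolding has_field_derivative_def by simp
  qed
  have "pd f k (x + t0 *\<^sub>R axis k 1) = f' (axis k 1)"
    unfolding pd_def by (rule DERIV_imp_deriv, rule gen) simp
  then show ?thesis using gen[of x t0] by simp
qed

lemma clairaut:
  fixes f :: "real^'n \<Rightarrow> real"
  assumes U: "open U" "u \<in> U"
    and d0: "\<And>x. x \<in> U \<Longrightarrow> f differentiable (at x)"
    and d1: "\<And>k x. x \<in> U \<Longrightarrow> pd f k differentiable (at x)"
    and d2: "\<And>k m x. x \<in> U \<Longrightarrow> pd (pd f k) m differentiable (at x)"
  shows "pd (pd f j) l u = pd (pd f l) j u"
proof (rule ccontr)
  assume ne: "pd (pd f j) l u \<noteq> pd (pd f l) j u"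
  define a where "a = pd (pd f j) l u"
  define b where "b = pd (pd f l) j u"
  define e where "e = \<bar>a - b\<bar> / 2"
  have e: "e > 0" using ne unfolding e_def a_def b_def by simp
  obtain d0 where d0p: "d0 > 0" and d0b: "ball u d0 \<subseteq> U" using U open_contains_ball by blast
  have "continuous (at u) (pd (pd f j) l)" using d2 U(2) differentiable_imp_continuous_within by blast
  then obtain d1 where d1p: "d1 > 0" and d1b: "\<And>x. dist x u < d1 \<Longrightarrow> dist (pd (pd f j) l x) a < e"
    using e unfolding continuous_at_eps_delta a_def by blast
  have "continuous (at u) (pd (pd f l) j)" using d2 U(2) differentiable_imp_continuous_within by blast
  then obtain d2 where d2p: "d2 > 0" and d2b: "\<And>x. dist x u < d2 \<Longrightarrow> dist (pd (pd f l) j x) b < e"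
    using e unfolding continuous_at_eps_delta b_def by blast
  define d where "d = min d0 (min d1 d2)"
  define h where "h = d / 3"
  have hp: "h > 0" using d0p d1p d2p unfolding h_def d_def by simp
  define El where "El = (axis l 1 :: real^'n)"
  define Ej where "Ej = (axis j 1 :: real^'n)"
  define P where "P s t = u + s *\<^sub>R El + t *\<^sub>R Ej" for s t
  have Palt: "P s t = (u + t *\<^sub>R Ej) + s *\<^sub>R El" for s t unfolding P_def by (simp add: algebra_simps)
  have distP: "dist (P s t) u < d" if "s \<in> {0..h}" "t \<in> {0..h}" for s t
  proof -
    have "dist (P s t) u = norm (s *\<^sub>R El + t *\<^sub>R Ej)" unfolding P_def dist_norm by (simp add: algebra_simps)
    also have "\<dots> \<le> norm (s *\<^sub>R El) + norm (t *\<^sub>R Ej)" by (rule norm_triangle_ineq)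
    also have "\<dots> = s + t" using that unfolding El_def Ej_def by simp
    also have "\<dots> < d" using that hp unfolding h_def by simp
    finally show ?thesis .
  qed
  have inU: "P s t \<in> U" if "s \<in> {0..h}" "t \<in> {0..h}" for s t
    using distP[OF that] d0b unfolding d_def by (auto simp: dist_commute)
  have "\<exists>\<xi>. 0 < \<xi> \<and> \<xi> < h \<and> (f (P h h) - f (P 0 h)) - (f (P h 0) - f (P 0 0))
          = (h - 0) * (pd f j (P h \<xi>) - pd f j (P 0 \<xi>))"
  proof (rule MVT2[OF hp, of "\<lambda>t. f (P h t) - f (P 0 t)"])
    fix t assume "0 \<le> t" "t \<le> h"
    then show "((\<lambda>t. f (P h t) - f (P 0 t)) has_real_derivative pd f j (P h t) - pd f j (P 0 t)) (at t)"
      unfolding P_def Ej_def using hp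
      by (intro derivative_intros line_deriv d0 inU[unfolded P_def Ej_def]) auto
  qed
  then obtain \<xi> where xi: "0 < \<xi>" "\<xi> < h"
    and r1: "(f (P h h) - f (P 0 h)) - (f (P h 0) - f (P 0 0)) = h * (pd f j (P h \<xi>) - pd f j (P 0 \<xi>))"
    by auto
  have "\<exists>\<eta>. 0 < \<eta> \<and> \<eta> < h \<and> pd f j (P h \<xi>) - pd f j (P 0 \<xi>) = (h - 0) * pd (pd f j) l (P \<eta> \<xi>)"
  proof (rule MVT2[OF hp, of "\<lambda>s. pd f j (P s \<xi>)"])
    fix s assume "0 \<le> s" "s \<le> h"
    then show "((\<lambda>s. pd f j (P s \<xi>)) has_real_derivative pd (pd f j) l (P s \<xi>)) (at s)"
      unfolding Palt El_def using hp xi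
      by (intro line_deriv d1 inU[unfolded Palt El_def]) auto
  qed
  then obtain \<eta> where eta: "0 < \<eta>" "\<eta> < h"
    and r2: "pd f j (P h \<xi>) - pd f j (P 0 \<xi>) = h * pd (pd f j) l (P \<eta> \<xi>)" by auto
  have "\<exists>\<eta>. 0 < \<eta> \<and> \<eta> < h \<and> (f (P h h) - f (P h 0)) - (f (P 0 h) - f (P 0 0))
          = (h - 0) * (pd f l (P \<eta> h) - pd f l (P \<eta> 0))"
  proof (rule MVT2[OF hp, of "\<lambda>s. f (P s h) - f (P s 0)"])
    fix s assume "0 \<le> s" "s \<le> h"
    then show "((\<lambda>s. f (P s h) - f (P s 0)) has_real_derivative pd f l (P s h) - pd f l (P s 0)) (at s)"
      unfolding Palt El_def using hp
      by (intro derivative_intros line_deriv d0 inU[unfolded Palt El_def]) auto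
  qed
  then obtain \<eta>' where eta': "0 < \<eta>'" "\<eta>' < h"
    and r3: "(f (P h h) - f (P h 0)) - (f (P 0 h) - f (P 0 0)) = h * (pd f l (P \<eta>' h) - pd f l (P \<eta>' 0))"
    by auto
  have "\<exists>\<xi>. 0 < \<xi> \<and> \<xi> < h \<and> pd f l (P \<eta>' h) - pd f l (P \<eta>' 0) = (h - 0) * pd (pd f l) j (P \<eta>' \<xi>)"
  proof (rule MVT2[OF hp, of "\<lambda>t. pd f l (P \<eta>' t)"])
    fix t assume "0 \<le> t" "t \<le> h"
    then show "((\<lambda>t. pd f l (P \<eta>' t)) has_real_derivative pd (pd f l) j (P \<eta>' t)) (at t)"
      unfolding P_def Ej_def using hp eta'
      by (intro line_deriv d1 inU[unfolded P_def Ej_def]) auto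
  qed
  then obtain \<xi>' where xi': "0 < \<xi>'" "\<xi>' < h"
    and r4: "pd f l (P \<eta>' h) - pd f l (P \<eta>' 0) = h * pd (pd f l) j (P \<eta>' \<xi>')" by auto
  have "h * (h * pd (pd f j) l (P \<eta> \<xi>)) = h * (h * pd (pd f l) j (P \<eta>' \<xi>'))"
    using r1 r2 r3 r4 by (simp add: algebra_simps)
  then have eq: "pd (pd f j) l (P \<eta> \<xi>) = pd (pd f l) j (P \<eta>' \<xi>')" using hp by simp
  have "dist (pd (pd f j) l (P \<eta> \<xi>)) a < e"
    using d1b distP[of \<eta> \<xi>] eta xi unfolding d_def by auto
  moreover have "dist (pd (pd f l) j (P \<eta>' \<xi>')) b < e"
    using d2b distP[of \<eta>' \<xi>'] eta' xi' unfolding d_def by auto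
  moreover have "\<And>x y a b :: real. \<bar>x - a\<bar> < \<bar>a - b\<bar> / 2 \<Longrightarrow> \<bar>y - b\<bar> < \<bar>a - b\<bar> / 2 \<Longrightarrow> x = y \<Longrightarrow> False"
    by (simp add: abs_if split: if_splits)
  ultimately show False using eq unfolding e_def dist_real_def by blast
qed



definition Tk :: "('n \<Rightarrow> 'n \<Rightarrow> 'n \<Rightarrow> real) \<Rightarrow> 'n \<Rightarrow> real^'n^'n" where
  "Tk T k = (\<chi> a b. T a b k)"

definition EXPR :: "real^'n^'n \<Rightarrow> ('n \<Rightarrow> 'n \<Rightarrow> 'n \<Rightarrow> real) \<Rightarrow> real^'n^'n \<Rightarrow> ('n \<Rightarrow> real^'n^'n) \<Rightarrow> 'n \<Rightarrow> real^'n \<Rightarrow> real^'n \<Rightarrow> real^'n \<Rightarrow> real" where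
  "EXPR G T A K i (w::real^'n) (p::real^'n) (q::real^'n) =
    (\<Sum>k\<in>UNIV. (\<Sum>j\<in>UNIV. (G ** Tk T k ** G) $ i $ j * p $ j) * (\<Sum>l\<in>UNIV. A $ k $ l * w $ l))
  + (\<Sum>j\<in>UNIV. (- G $ i $ j) * ((\<Sum>m\<in>UNIV. A $ m $ j * q $ m)
         + (\<Sum>m\<in>UNIV. \<Sum>l\<in>UNIV. K l $ m $ j * w $ l * p $ m)))
  - (\<Sum>j\<in>UNIV. A $ i $ j * ((\<Sum>k\<in>UNIV. (\<Sum>r\<in>UNIV. (G ** Tk T k ** G) $ j $ r * p $ r) * w $ k)
         + (\<Sum>r\<in>UNIV. (- G $ j $ r) * q $ r)))"

definition cc :: "real^'n^'n \<Rightarrow> ('n \<Rightarrow> 'n \<Rightarrow> 'n \<Rightarrow> real) \<Rightarrow> real^'n^'n \<Rightarrow> ('n \<Rightarrow> real^'n^'n) \<Rightarrow> 'n \<Rightarrow> 'n \<Rightarrow> 'n \<Rightarrow> real" where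
  "cc G T A K i l m = (\<Sum>k\<in>UNIV. (G ** Tk T k ** G) $ i $ m * A $ k $ l)
     - (\<Sum>j\<in>UNIV. G $ i $ j * K l $ m $ j) - (\<Sum>j\<in>UNIV. A $ i $ j * (G ** Tk T l ** G) $ j $ m)"

definition dd :: "real^'n^'n \<Rightarrow> real^'n^'n \<Rightarrow> 'n \<Rightarrow> 'n \<Rightarrow> real" where
  "dd G A i m = - (\<Sum>j\<in>UNIV. G $ i $ j * A $ m $ j) + (\<Sum>j\<in>UNIV. A $ i $ j * G $ j $ m)"

lemma swap3: "(\<Sum>k\<in>A. \<Sum>m\<in>B. \<Sum>l\<in>C. F k m l) = (\<Sum>l\<in>C. \<Sum>m\<in>B. \<Sum>k\<in>A. (F k m l::real))"
proof -
  have "(\<Sum>k\<in>A. \<Sum>m\<in>B. \<Sum>l\<in>C. F k m l) = (\<Sum>k\<in>A. \<Sum>l\<in>C. \<Sum>m\<in>B. F k m l)"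
    by (rule sum.cong[OF refl], rule sum.swap)
  also have "\<dots> = (\<Sum>l\<in>C. \<Sum>k\<in>A. \<Sum>m\<in>B. F k m l)" by (rule sum.swap)
  also have "\<dots> = (\<Sum>l\<in>C. \<Sum>m\<in>B. \<Sum>k\<in>A. F k m l)"
    by (rule sum.cong[OF refl], rule sum.swap)
  finally show ?thesis .
qed

lemma EXPR_eq:
  "EXPR G T A K i w p q = (\<Sum>l\<in>UNIV. \<Sum>m\<in>UNIV. w $ l * p $ m * cc G T A K i l m)
     + (\<Sum>m\<in>UNIV. q $ m * dd G A i m)"
proof -
  have t1: "(\<Sum>k\<in>UNIV. (\<Sum>j\<in>UNIV. (G ** Tk T k ** G) $ i $ j * p $ j) * (\<Sum>l\<in>UNIV. A $ k $ l * w $ l))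
     = (\<Sum>l\<in>UNIV. \<Sum>m\<in>UNIV. w $ l * p $ m * (\<Sum>k\<in>UNIV. (G ** Tk T k ** G) $ i $ m * A $ k $ l))"
  proof -
    have "(\<Sum>k\<in>UNIV. (\<Sum>j\<in>UNIV. (G ** Tk T k ** G) $ i $ j * p $ j) * (\<Sum>l\<in>UNIV. A $ k $ l * w $ l))
      = (\<Sum>k\<in>UNIV. \<Sum>m\<in>UNIV. \<Sum>l\<in>UNIV. ((G ** Tk T k ** G) $ i $ m * p $ m) * (A $ k $ l * w $ l))"
      by (simp add: sum_product)
    also have "\<dots> = (\<Sum>l\<in>UNIV. \<Sum>m\<in>UNIV. \<Sum>k\<in>UNIV. ((G ** Tk T k ** G) $ i $ m * p $ m) * (A $ k $ l * w $ l))"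
      by (rule swap3)
    finally show ?thesis by (simp add: sum_distrib_left mult_ac)
  qed
  have t2: "(\<Sum>j\<in>UNIV. (- G $ i $ j) * ((\<Sum>m\<in>UNIV. A $ m $ j * q $ m)
         + (\<Sum>m\<in>UNIV. \<Sum>l\<in>UNIV. K l $ m $ j * w $ l * p $ m)))
     = (\<Sum>m\<in>UNIV. q $ m * (- (\<Sum>j\<in>UNIV. G $ i $ j * A $ m $ j)))
      + (\<Sum>l\<in>UNIV. \<Sum>m\<in>UNIV. w $ l * p $ m * (- (\<Sum>j\<in>UNIV. G $ i $ j * K l $ m $ j)))"
  proof -
    have a: "(\<Sum>j\<in>UNIV. (- G $ i $ j) * (\<Sum>m\<in>UNIV. A $ m $ j * q $ m))
      = (\<Sum>m\<in>UNIV. q $ m * (- (\<Sum>j\<in>UNIV. G $ i $ j * A $ m $ j)))"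
      by (simp add: sum_distrib_left sum_negf mult_ac, subst sum.swap, simp)
    have "(\<Sum>j\<in>UNIV. (- G $ i $ j) * (\<Sum>m\<in>UNIV. \<Sum>l\<in>UNIV. K l $ m $ j * w $ l * p $ m))
      = (\<Sum>j\<in>UNIV. \<Sum>m\<in>UNIV. \<Sum>l\<in>UNIV. (- G $ i $ j) * (K l $ m $ j * w $ l * p $ m))"
      by (simp add: sum_distrib_left)
    also have "\<dots> = (\<Sum>l\<in>UNIV. \<Sum>m\<in>UNIV. \<Sum>j\<in>UNIV. (- G $ i $ j) * (K l $ m $ j * w $ l * p $ m))"
      by (rule swap3)
    finally have b: "(\<Sum>j\<in>UNIV. (- G $ i $ j) * (\<Sum>m\<in>UNIV. \<Sum>l\<in>UNIV. K l $ m $ j * w $ l * p $ m))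
      = (\<Sum>l\<in>UNIV. \<Sum>m\<in>UNIV. w $ l * p $ m * (- (\<Sum>j\<in>UNIV. G $ i $ j * K l $ m $ j)))"
      by (simp add: sum_distrib_left sum_negf mult_ac)
    show ?thesis by (simp only: distrib_left sum.distrib a b)
  qed
  have t3: "(\<Sum>j\<in>UNIV. A $ i $ j * ((\<Sum>k\<in>UNIV. (\<Sum>r\<in>UNIV. (G ** Tk T k ** G) $ j $ r * p $ r) * w $ k)
         + (\<Sum>r\<in>UNIV. (- G $ j $ r) * q $ r)))
     = (\<Sum>l\<in>UNIV. \<Sum>m\<in>UNIV. w $ l * p $ m * (\<Sum>j\<in>UNIV. A $ i $ j * (G ** Tk T l ** G) $ j $ m))
      + (\<Sum>m\<in>UNIV. q $ m * (- (\<Sum>j\<in>UNIV. A $ i $ j * G $ j $ m)))"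
  proof -
    have a: "(\<Sum>j\<in>UNIV. A $ i $ j * (\<Sum>r\<in>UNIV. (- G $ j $ r) * q $ r))
      = (\<Sum>m\<in>UNIV. q $ m * (- (\<Sum>j\<in>UNIV. A $ i $ j * G $ j $ m)))"
      by (simp add: sum_distrib_left sum_negf mult_ac, subst sum.swap, simp)
    have "(\<Sum>j\<in>UNIV. A $ i $ j * (\<Sum>k\<in>UNIV. (\<Sum>r\<in>UNIV. (G ** Tk T k ** G) $ j $ r * p $ r) * w $ k))
      = (\<Sum>j\<in>UNIV. \<Sum>k\<in>UNIV. \<Sum>r\<in>UNIV. A $ i $ j * ((G ** Tk T k ** G) $ j $ r * p $ r * w $ k))"
      by (simp add: sum_distrib_left sum_distrib_right)
    also have "\<dots> = (\<Sum>k\<in>UNIV. \<Sum>r\<in>UNIV. \<Sum>j\<in>UNIV. A $ i $ j * ((G ** Tk T k ** G) $ j $ r * p $ r * w $ k))"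
      by (subst sum.swap, rule sum.cong[OF refl], rule sum.swap)
    finally have b: "(\<Sum>j\<in>UNIV. A $ i $ j * (\<Sum>k\<in>UNIV. (\<Sum>r\<in>UNIV. (G ** Tk T k ** G) $ j $ r * p $ r) * w $ k))
      = (\<Sum>l\<in>UNIV. \<Sum>m\<in>UNIV. w $ l * p $ m * (\<Sum>j\<in>UNIV. A $ i $ j * (G ** Tk T l ** G) $ j $ m))"
      by (simp add: sum_distrib_left mult_ac)
    show ?thesis using a b by (simp add: distrib_left sum.distrib)
  qed
  show ?thesis unfolding EXPR_def t1 t2 t3 cc_def dd_def
    by (simp add: algebra_simps sum.distrib sum_subtractf sum_negf)
qed



lemma ifm: "(if P then 1 else 0) * (x::real) = (if P then x else 0)" by simp

lemma single: "(\<Sum>m\<in>UNIV. axis k 1 $ m * (f m::real)) = f k"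
  unfolding axis_def by (simp add: ifm)

lemma dsum: "(\<Sum>la\<in>UNIV. \<Sum>ma\<in>UNIV. axis l 1 $ la * axis m 1 $ ma * (c la ma::real)) = c l m"
proof -
  have "(\<Sum>la\<in>UNIV. \<Sum>ma\<in>UNIV. axis l 1 $ la * axis m 1 $ ma * c la ma)
      = (\<Sum>la\<in>UNIV. axis l 1 $ la * (\<Sum>ma\<in>UNIV. axis m 1 $ ma * c la ma))"
    by (simp add: sum_distrib_left mult.assoc)
  also have "\<dots> = c l m" by (simp add: single)
  finally show ?thesis .
qed

lemma coeff_extract:
  "(\<forall>i w p q. EXPR G T A K i w p q = 0) \<longleftrightarrow>
     (\<forall>i l m. cc G T A K i l m = 0) \<and> (\<forall>i m. dd G A i m = 0)"
proof
  assume H: "\<forall>i w p q. EXPR G T A K i w p q = 0"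
  have "cc G T A K i l m = 0" for i l m
    using H[rule_format, of i "axis l 1" "axis m 1" 0]
    by (simp add: EXPR_eq dsum)
  moreover have "dd G A i m = 0" for i m
    using H[rule_format, of i 0 0 "axis m 1"]
    by (simp add: EXPR_eq single)
  ultimately show "(\<forall>i l m. cc G T A K i l m = 0) \<and> (\<forall>i m. dd G A i m = 0)" by blast
next
  assume "(\<forall>i l m. cc G T A K i l m = 0) \<and> (\<forall>i m. dd G A i m = 0)"
  then show "\<forall>i w p q. EXPR G T A K i w p q = 0" by (simp add: EXPR_eq)
qed

definition Sm :: "('n \<Rightarrow> 'n \<Rightarrow> 'n \<Rightarrow> real) \<Rightarrow> real^'n^'n \<Rightarrow> 'n \<Rightarrow> real^'n^'n" where
  "Sm T A l = (\<chi> a b. \<Sum>k\<in>UNIV. T a b k * A $ k $ l)"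

lemma cc_mat:
  "cc G T A K i l m = (G ** Sm T A l ** G - G ** transpose (K l) - A ** G ** Tk T l ** G) $ i $ m"
proof -
  have t1: "(\<Sum>k\<in>UNIV. (G ** Tk T k ** G) $ i $ m * A $ k $ l) = (G ** Sm T A l ** G) $ i $ m"
  proof -
    have "(\<Sum>k\<in>UNIV. (G ** Tk T k ** G) $ i $ m * A $ k $ l)
       = (\<Sum>k\<in>UNIV. \<Sum>b\<in>UNIV. \<Sum>a\<in>UNIV. G $ i $ a * T a b k * G $ b $ m * A $ k $ l)"
      by (simp add: matrix_matrix_mult_def Tk_def sum_distrib_left sum_distrib_right)
    also have "\<dots> = (\<Sum>a\<in>UNIV. \<Sum>b\<in>UNIV. \<Sum>k\<in>UNIV. G $ i $ a * T a b k * G $ b $ m * A $ k $ l)"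
      by (rule swap3)
    also have "\<dots> = (\<Sum>b\<in>UNIV. \<Sum>a\<in>UNIV. \<Sum>k\<in>UNIV. G $ i $ a * T a b k * G $ b $ m * A $ k $ l)"
      by (rule sum.swap)
    also have "\<dots> = (G ** Sm T A l ** G) $ i $ m"
      by (simp add: matrix_matrix_mult_def Sm_def sum_distrib_left sum_distrib_right mult_ac)
    finally show ?thesis .
  qed
  have t2: "(\<Sum>j\<in>UNIV. G $ i $ j * K l $ m $ j) = (G ** transpose (K l)) $ i $ m"
    by (simp add: matrix_matrix_mult_def transpose_def)
  have t3: "(\<Sum>j\<in>UNIV. A $ i $ j * (G ** Tk T l ** G) $ j $ m) = (A ** G ** Tk T l ** G) $ i $ m"
  proof -
    have "A ** G ** Tk T l ** G = A ** (G ** Tk T l ** G)" by (simp add: matrix_mul_assoc)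
    then show ?thesis by (simp add: matrix_matrix_mult_def[of A "G ** Tk T l ** G"])
  qed
  show ?thesis unfolding cc_def t1 t2 t3 by simp
qed

lemma dd_mat: "dd G A i m = (A ** G - G ** transpose A) $ i $ m"
  proof -
  have "(A ** G) $ i $ m = (\<Sum>j\<in>UNIV. A $ i $ j * G $ j $ m)" by (simp add: matrix_matrix_mult_def)
  moreover have "(G ** transpose A) $ i $ m = (\<Sum>j\<in>UNIV. G $ i $ j * A $ m $ j)"
    by (simp add: matrix_matrix_mult_def transpose_def)
  ultimately show ?thesis unfolding dd_def by simp
qed

lemma matrix_mul_ldistrib_diff:
  fixes B C :: "real^'m^'n"
  shows "A ** (B - C) = A ** B - A ** C"
  by (vector matrix_matrix_mult_def sum_subtractf[symmetric] field_simps)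

lemma core:
  fixes g G A :: "real^'n^'n" and K :: "'n \<Rightarrow> real^'n^'n" and T :: "'n \<Rightarrow> 'n \<Rightarrow> 'n \<Rightarrow> real"
  assumes gG: "g ** G = mat 1" and Gg: "G ** g = mat 1"
    and gs: "\<And>a b. g $ a $ b = - g $ b $ a"
    and Ts: "\<And>a b k. T a b k = - T b a k"
  shows "(\<forall>i w p q. EXPR G T A K i w p q = 0) \<longleftrightarrow>
     ((\<forall>p q. (\<Sum>j\<in>UNIV. g $ q $ j * A $ j $ p) + (\<Sum>j\<in>UNIV. g $ p $ j * A $ j $ q) = 0) \<and>
      (\<forall>p q l. (\<Sum>k\<in>UNIV. g $ q $ k * K l $ k $ p + T p q k * A $ k $ l + T q k l * A $ k $ p) = 0))"
proof -
  have r1: "X ** g ** G = X" for X :: "real^'n^'n"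
    by (metis gG matrix_mul_assoc matrix_mul_rid)
  have r2: "X ** G ** g = X" for X :: "real^'n^'n"
    by (metis Gg matrix_mul_assoc matrix_mul_rid)
  have zc: "X = 0 \<longleftrightarrow> g ** X ** g = 0" for X :: "real^'n^'n"
  proof
    assume "g ** X ** g = 0"
    then have "G ** (g ** X ** g) ** G = 0" by (simp add: matrix_mul_assoc)
    then show "X = 0" by (simp add: matrix_mul_assoc Gg r1)
  qed simp
  let ?D = "A ** G - G ** transpose A"
  let ?C = "\<lambda>l. G ** Sm T A l ** G - G ** transpose (K l) - A ** G ** Tk T l ** G"
  have dD: "(\<forall>i m. dd G A i m = 0) \<longleftrightarrow> ?D = 0"
    by (simp add: dd_mat vec_eq_iff)
  have cC: "(\<forall>i l m. cc G T A K i l m = 0) \<longleftrightarrow> (\<forall>l. ?C l = 0)"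
    by (auto simp add: cc_mat vec_eq_iff)
  have E1: "g ** ?D ** g = g ** A - transpose A ** g"
    by (simp add: matrix_mul_ldistrib_diff matrix_mul_rdistrib_diff matrix_mul_assoc gG r2)
  have c1: "(\<forall>p q. (\<Sum>j\<in>UNIV. g $ q $ j * A $ j $ p) + (\<Sum>j\<in>UNIV. g $ p $ j * A $ j $ q) = 0)
      \<longleftrightarrow> g ** A - transpose A ** g = 0"
  proof -
    have "(g ** A - transpose A ** g) $ q $ p = (\<Sum>j\<in>UNIV. g $ q $ j * A $ j $ p) + (\<Sum>j\<in>UNIV. g $ p $ j * A $ j $ q)" for p q
    proof -
      have "(transpose A ** g) $ q $ p = (\<Sum>j\<in>UNIV. A $ j $ q * g $ j $ p)"
        by (simp add: matrix_matrix_mult_def transpose_def)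
      also have "\<dots> = - (\<Sum>j\<in>UNIV. g $ p $ j * A $ j $ q)"
        by (simp add: gs[of _ p] sum_negf mult_ac)
      finally show ?thesis by (simp add: matrix_matrix_mult_def)
    qed
    then show ?thesis by (auto simp: vec_eq_iff)
  qed
  have E2: "g ** ?C l ** g = Sm T A l - transpose (K l) ** g - transpose A ** Tk T l"
    if "g ** A = transpose A ** g" for l
    by (simp add: matrix_mul_ldistrib_diff matrix_mul_rdistrib_diff matrix_mul_assoc gG r2 that r1)
  have c2: "(Sm T A l - transpose (K l) ** g - transpose A ** Tk T l) $ p $ q
       = (\<Sum>k\<in>UNIV. g $ q $ k * K l $ k $ p + T p q k * A $ k $ l + T q k l * A $ k $ p)" for p q l
  proof -
    have a: "(transpose (K l) ** g) $ p $ q = - (\<Sum>k\<in>UNIV. g $ q $ k * K l $ k $ p)"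
      by (simp add: matrix_matrix_mult_def transpose_def gs[of _ q] sum_negf mult_ac)
    have b: "(transpose A ** Tk T l) $ p $ q = - (\<Sum>k\<in>UNIV. T q k l * A $ k $ p)"
      by (simp add: matrix_matrix_mult_def transpose_def Tk_def Ts[of _ q] sum_negf mult_ac)
    show ?thesis using a b by (simp add: Sm_def sum.distrib)
  qed
  show ?thesis
    unfolding coeff_extract dD cC c1
  proof (cases "g ** A - transpose A ** g = 0")
    case True
    then have gA: "g ** A = transpose A ** g" by simp
    have "?D = 0" by (subst zc) (simp add: E1 True)
    moreover have "(\<forall>l. ?C l = 0) \<longleftrightarrow>
        (\<forall>p q l. (\<Sum>k\<in>UNIV. g $ q $ k * K l $ k $ p + T p q k * A $ k $ l + T q k l * A $ k $ p) = 0)"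
      by (subst zc) (auto simp: E2[OF gA] vec_eq_iff c2[symmetric])
    ultimately show "((\<forall>l. ?C l = 0) \<and> ?D = 0) \<longleftrightarrow> (g ** A - transpose A ** g = 0 \<and>
        (\<forall>p q l. (\<Sum>k\<in>UNIV. g $ q $ k * K l $ k $ p + T p q k * A $ k $ l + T q k l * A $ k $ p) = 0))"
      using True by simp
  next
    case False
    then have "?D \<noteq> 0" by (subst zc) (simp add: E1)
    then show "((\<forall>l. ?C l = 0) \<and> ?D = 0) \<longleftrightarrow> (g ** A - transpose A ** g = 0 \<and>
        (\<forall>p q l. (\<Sum>k\<in>UNIV. g $ q $ k * K l $ k $ p + T p q k * A $ k $ l + T q k l * A $ k $ p) = 0))"
      using False by simp
  qed
qed



lemma gmat_line: "gmat T g0 (u + t *\<^sub>R axis k 1) = gmat T g0 u + t *\<^sub>R Tk T k"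
proof -
  have "(\<Sum>m\<in>UNIV. T a b m * (u + t *\<^sub>R axis k 1) $ m) = (\<Sum>m\<in>UNIV. T a b m * u $ m) + t * T a b k" for a b
  proof -
    have "(\<Sum>m\<in>UNIV. T a b m * (u + t *\<^sub>R axis k 1) $ m)
       = (\<Sum>m\<in>UNIV. T a b m * u $ m) + t * (\<Sum>m\<in>UNIV. axis k 1 $ m * T a b m)"
      by (simp add: algebra_simps sum.distrib sum_distrib_left)
    then show ?thesis by (simp add: single)
  qed
  then show ?thesis by (simp add: gmat_def Tk_def vec_eq_iff)
qed

lemma pd_gmat: "pd (\<lambda>v. gmat T g0 v $ p $ q) k u = T p q k"
  unfolding pd_def gmat_line
  by (rule DERIV_imp_deriv) (auto simp: Tk_def intro!: derivative_eq_intros)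

lemma single': "(\<Sum>m\<in>UNIV. (f m::real) * axis k 1 $ m) = f k"
  using single[of k f] by (simp add: mult.commute)

lemma Cop_p: "pd (\<lambda>r. Cop T g0 u r $ i) j p = - ginv T g0 u $ i $ j"
  unfolding pd_def Cop_def
  by (rule DERIV_imp_deriv) (auto simp: single single' intro!: derivative_eq_intros)

lemma Cop_u:
  assumes "invertible (gmat T g0 u)"
  shows "pd (\<lambda>v. Cop T g0 v p $ i) k u = (\<Sum>j\<in>UNIV. (ginv T g0 u ** Tk T k ** ginv T g0 u) $ i $ j * p $ j)"
proof -
  have "((\<lambda>t. Cop T g0 (u + t *\<^sub>R axis k 1) p $ i) has_real_derivative
        - (\<Sum>j\<in>UNIV. (- (ginv T g0 u ** Tk T k ** ginv T g0 u) $ i $ j) * p $ j)) (at 0)"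
    unfolding Cop_def ginv_def gmat_line
    by (auto intro!: derivative_eq_intros inv_line_deriv[OF assms])
  then show ?thesis unfolding pd_def by (simp add: DERIV_imp_deriv sum_negf)
qed

lemma smooth_diff:
  assumes "smooth_on U f" "x \<in> U"
  shows "f differentiable (at x)" "pd f k differentiable (at x)" "pd (pd f k) m differentiable (at x)"
proof -
  have o: "open U" using assms(1) unfolding smooth_on_def by blast
  have "iter_pd ks f differentiable_on U" for ks using assms(1) unfolding smooth_on_def by blast
  then have "iter_pd ks f differentiable (at x)" for ks
    using differentiable_on_eq_differentiable_at[OF o] assms(2) by blast
  from this[of "[]"] this[of "[k]"] this[of "[m,k]"]
  show "f differentiable (at x)" "pd f k differentiable (at x)" "pd (pd f k) m differentiable (at x)"
    by simp_all
qed

lemma pointwise: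
  fixes V :: "real^'n \<Rightarrow> real^'n"
    and T :: "'n \<Rightarrow> 'n \<Rightarrow> 'n \<Rightarrow> real"
    and g0 :: "'n \<Rightarrow> 'n \<Rightarrow> real"
    and U :: "(real^'n) set"
  assumes smooth: "\<And>i. smooth_on U (\<lambda>u. V u $ i)"
    and skewT: "totally_skew3 T"
    and skewg0: "skew2 g0"
    and uU: "u \<in> U"
    and inv: "invertible (gmat T g0 u)"
  shows "(\<forall>w p q i. ellF V (Cop T g0) i u w p q = 0)
     \<longleftrightarrow> ((\<forall>p q. (\<Sum>j\<in>UNIV. gmat T g0 u $ q $ j * pd (\<lambda>v. V v $ j) p u)
                 + (\<Sum>j\<in>UNIV. gmat T g0 u $ p $ j * pd (\<lambda>v. V v $ j) q u) = 0)
         \<and> (\<forall>p q l. (\<Sum>k\<in>UNIV. gmat T g0 u $ q $ k * pd (pd (\<lambda>v. V v $ k) p) l u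
                 + pd (\<lambda>v. gmat T g0 v $ p $ q) k u * pd (\<lambda>v. V v $ k) l u
                 + pd (\<lambda>v. gmat T g0 v $ q $ k) l u * pd (\<lambda>v. V v $ k) p u) = 0))"
proof -
  define g where "g = gmat T g0 u"
  define G where "G = ginv T g0 u"
  define A where "A = (\<chi> m j. pd (\<lambda>v. V v $ m) j u)"
  define K where "K l = (\<chi> m j. pd (pd (\<lambda>v. V v $ m) l) j u)" for l
  have gG: "g ** G = mat 1" and Gg: "G ** g = mat 1"
    using mi[OF inv] unfolding g_def G_def ginv_def by auto
  have Ts: "T a b k = - T b a k" for a b k using skewT unfolding totally_skew3_def by blast
  have gs: "g $ a $ b = - g $ b $ a" for a b
  proof -
    have "(\<Sum>k\<in>UNIV. T a b k * u $ k) = - (\<Sum>k\<in>UNIV. T b a k * u $ k)"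
      by (simp add: Ts[of a b] sum_negf)
    moreover have "g0 a b = - g0 b a" using skewg0 unfolding skew2_def by blast
    ultimately show ?thesis unfolding g_def gmat_def by simp
  qed
  have ell: "ellF V (Cop T g0) i u w p q = EXPR G T A K i w p q" for i w p q
    unfolding ellF_def Dt_def Dx_def EXPR_def
    by (simp add: Cop_u[OF inv] Cop_p A_def K_def G_def)
  have o: "open U" using smooth unfolding smooth_on_def by blast
  have sym: "pd (pd (\<lambda>v. V v $ k) p) l u = K l $ k $ p" for k p l
    unfolding K_def
    using clairaut[OF o uU, of "\<lambda>v. V v $ k"] smooth_diff[OF smooth] by simp
  have "(\<forall>w p q i. ellF V (Cop T g0) i u w p q = 0) \<longleftrightarrow> (\<forall>i w p q. EXPR G T A K i w p q = 0)"
    by (auto simp: ell)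
  also have "\<dots> \<longleftrightarrow>
     ((\<forall>p q. (\<Sum>j\<in>UNIV. g $ q $ j * A $ j $ p) + (\<Sum>j\<in>UNIV. g $ p $ j * A $ j $ q) = 0) \<and>
      (\<forall>p q l. (\<Sum>k\<in>UNIV. g $ q $ k * K l $ k $ p + T p q k * A $ k $ l + T q k l * A $ k $ p) = 0))"
    by (rule core[OF gG Gg gs Ts])
  finally show ?thesis
    by (simp add: g_def A_def sym pd_gmat)
qed


theorem mainTheorem5:
  fixes V :: "real^'n \<Rightarrow> real^'n"
    and T :: "'n \<Rightarrow> 'n \<Rightarrow> 'n \<Rightarrow> real"
    and g0 :: "'n \<Rightarrow> 'n \<Rightarrow> real"
    and U :: "(real^'n) set"
  assumes smooth: "\<And>i. smooth_on U (\<lambda>u. V u $ i)"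
    and skewT: "totally_skew3 T"
    and skewg0: "skew2 g0"
    and nondeg: "\<And>u. u \<in> U \<Longrightarrow> invertible (gmat T g0 u)"
  shows "(\<forall>u\<in>U. \<forall>w p q i. ellF V (Cop T g0) i u w p q = 0)
     \<longleftrightarrow> (\<forall>u\<in>U.
           (\<forall>p q. (\<Sum>j\<in>UNIV. gmat T g0 u $ q $ j * pd (\<lambda>v. V v $ j) p u)
                 + (\<Sum>j\<in>UNIV. gmat T g0 u $ p $ j * pd (\<lambda>v. V v $ j) q u) = 0)
         \<and> (\<forall>p q l. (\<Sum>k\<in>UNIV. gmat T g0 u $ q $ k * pd (pd (\<lambda>v. V v $ k) p) l u
                 + pd (\<lambda>v. gmat T g0 v $ p $ q) k u * pd (\<lambda>v. V v $ k) l u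
                 + pd (\<lambda>v. gmat T g0 v $ q $ k) l u * pd (\<lambda>v. V v $ k) p u) = 0))"
  by (simp add: pointwise[OF smooth skewT skewg0 _ nondeg])

end
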